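(* Let $d\ge1$, $\beta>0$, fix a prompt $x$, and let $\pi_{\rm ref}(y|x)=\mathcal{N}(y;\mathbf{0},I)$ and $\pi_{\boldsymbol{\theta}}(y|x)=\mathcal{N}(y;\mu_{\boldsymbol{\theta}},\sigma^2I)$ for $\sigma>0$, where $\mu_{\boldsymbol{\theta}}=\mu_{\boldsymbol{\theta}}(x)\in\mathbb{R}^d$ depends differentiably on the parameter $\boldsymbol{\theta}$. Let $r_{\boldsymbol{\phi}}:\mathbb{R}^d\to\mathbb{R}$ be $C^2$ with $\sup_{y\in\mathbb{R}^d}\|\nabla_y r_{\boldsymbol{\phi}}(y)\|\le M<\infty$. Define \[ \mathcal{J}_\sigma(\boldsymbol{\theta},\boldsymbol{\phi})=\mathbb{E}_{y\sim\pi_{\boldsymbol{\theta}}(\cdot|x)}[r_{\boldsymbol{\phi}}(y)]-\beta\,D_{KL}\big(\pi_{\boldsymbol{\theta}}(\cdot|x)\,\|\,\pi_{\rm ref}(\cdot|x)\big). \] Then \[ \lim_{\sigma\to0}\nabla_{\boldsymbol{\theta}}\mathcal{J}_\sigma(\boldsymbol{\theta},\boldsymbol{\phi})=\nabla_{\boldsymbol{\theta}}\Big[r_{\boldsymbol{\phi}}(\mu_{\boldsymbol{\theta}})-\frac{\beta}{2}\|\mu_{\boldsymbol{\theta}}\|^2\Big]. \]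
   Context: $\mathcal{N}(y;\mu,\Sigma)$ denotes the Gaussian density on $\mathbb{R}^d$ with mean $\mu$ and covariance $\Sigma$; $D_{KL}$ is the Kullback–Leibler divergence. *)

theory Defs
  imports "HOL-Analysis.Analysis" "HOL-Probability.Probability"
begin

definition gauss_density :: "real^'n \<Rightarrow> real \<Rightarrow> real^'n \<Rightarrow> real" where
  "gauss_density m s y =
     exp (- (norm (y - m))\<^sup>2 / (2 * s\<^sup>2)) / (2 * pi * s\<^sup>2) powr (real CARD('n) / 2)"

definition gauss_measure :: "real^'n \<Rightarrow> real \<Rightarrow> (real^'n) measure" where
  "gauss_measure m s = density lborel (gauss_density m s)"

text \<open>Note: library KL_divergence b M N is D(N || M).\<close>
definition J_obj :: "real \<Rightarrow> ('p \<Rightarrow> real^'n) \<Rightarrow> (real^'n \<Rightarrow> real) \<Rightarrow> real \<Rightarrow> 'p \<Rightarrow> real" where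
  "J_obj \<beta> \<mu> r \<sigma> \<theta> =
     (\<integral>y. r y \<partial>(gauss_measure (\<mu> \<theta>) \<sigma>))
     - \<beta> * KL_divergence (exp 1) (gauss_measure 0 1) (gauss_measure (\<mu> \<theta>) \<sigma>)"

end

theory Submission
  imports Defs
begin


lemma norm_sq_basis: "(norm (x::'a::euclidean_space))\<^sup>2 = (\<Sum>b\<in>Basis. (x \<bullet> b)\<^sup>2)"
proof -
  have "(norm x)\<^sup>2 = x \<bullet> x" by (simp add: dot_square_norm)
  also have "\<dots> = (\<Sum>b\<in>Basis. (x \<bullet> b)\<^sup>2)" by (subst euclidean_inner) (simp add: power2_eq_square)
  finally show ?thesis .
qed

lemma gd_pos: "s \<noteq> 0 \<Longrightarrow> gauss_density m s y > 0"
  unfolding gauss_density_def by simp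

lemma gd_nonneg: "gauss_density m s y \<ge> 0"
  unfolding gauss_density_def by simp

lemma gd_prod:
  fixes m y :: "real^'n"
  assumes s: "s > 0"
  shows "gauss_density m s y = (\<Prod>b\<in>Basis. normal_density (m \<bullet> b) s (y \<bullet> b))"
proof -
  let ?a = "2 * pi * s\<^sup>2"
  have a: "?a > 0" using s by simp
  have "(\<Prod>b\<in>Basis. normal_density (m \<bullet> b) s (y \<bullet> b))
      = (\<Prod>b\<in>(Basis::(real^'n) set). 1 / sqrt ?a) * (\<Prod>b\<in>Basis. exp (- ((y-m) \<bullet> b)\<^sup>2 / (2 * s\<^sup>2)))"
    unfolding normal_density_def prod.distrib[symmetric] by (simp add: inner_diff_left)
  also have "(\<Prod>b\<in>Basis. exp (- ((y-m) \<bullet> b)\<^sup>2 / (2 * s\<^sup>2))) = exp (\<Sum>b\<in>Basis. - ((y-m) \<bullet> b)\<^sup>2 / (2 * s\<^sup>2))"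
    by (simp add: exp_sum)
  also have "(\<Sum>b\<in>Basis. - ((y-m) \<bullet> b)\<^sup>2 / (2 * s\<^sup>2)) = - (norm (y-m))\<^sup>2 / (2 * s\<^sup>2)"
    by (simp add: norm_sq_basis[of "y-m"] sum_divide_distrib[symmetric] sum_negf)
  also have "(\<Prod>b\<in>(Basis::(real^'n) set). 1 / sqrt ?a) = 1 / ?a powr (real CARD('n) / 2)"
  proof -
    have "(\<Prod>b\<in>(Basis::(real^'n) set). 1 / sqrt ?a) = (1 / sqrt ?a) ^ CARD('n)"
      by simp
    also have "\<dots> = 1 / (?a powr (1/2)) ^ CARD('n)"
      using a by (simp add: powr_half_sqrt power_one_over)
    also have "(?a powr (1/2)) ^ CARD('n) = ?a powr (real CARD('n) / 2)"
      using a by (subst powr_power) auto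
    finally show ?thesis .
  qed
  finally show ?thesis unfolding gauss_density_def by simp
qed


lemma gd_meas[measurable]: "gauss_density m s \<in> borel_measurable borel"
  unfolding gauss_density_def by measurable

lemma gd_nn:
  fixes m :: "real^'n"
  assumes s: "s > 0"
  shows "(\<integral>\<^sup>+y. ennreal (gauss_density m s y) \<partial>lborel) = 1"
proof -
  have "(\<integral>\<^sup>+y. ennreal (gauss_density m s y) \<partial>lborel)
      = (\<integral>\<^sup>+y. (\<Prod>b\<in>Basis. ennreal (normal_density (m \<bullet> b) s (y \<bullet> b))) \<partial>lborel)"
    using s by (simp add: gd_prod prod_ennreal)
  also have "\<dots> = (\<Prod>b\<in>(Basis::(real^'n) set). (\<integral>\<^sup>+x. ennreal (normal_density (m \<bullet> b) s x) \<partial>lborel))"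
    by (rule nn_integral_lborel_prod) auto
  also have "\<dots> = (\<Prod>b\<in>(Basis::(real^'n) set). 1)"
  proof (rule prod.cong[OF refl])
    fix b :: "real^'n"
    show "(\<integral>\<^sup>+x. ennreal (normal_density (m \<bullet> b) s x) \<partial>lborel) = 1"
      using s by (subst nn_integral_eq_integral) auto
  qed
  finally show ?thesis by simp
qed

lemma gd_integrable: "s > 0 \<Longrightarrow> integrable lborel (gauss_density m s)"
  by (rule integrableI_nonneg) (auto simp: gd_nn gd_nonneg)

lemma gd_integral: "s > 0 \<Longrightarrow> (\<integral>y. gauss_density m s y \<partial>lborel) = 1"
  using nn_integral_eq_integral[OF gd_integrable[of s m], symmetric] gd_nn[of s m]
  by (simp add: gd_nonneg)

lemma lborel_affine_int:
  fixes f :: "'a::euclidean_space \<Rightarrow> 'b::{banach,second_countable_topology}"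
  assumes c: "c \<noteq> 0" and [measurable]: "f \<in> borel_measurable borel"
  shows "integrable lborel f \<longleftrightarrow> integrable lborel (\<lambda>x. f (t + c *\<^sub>R x))"
    and "integral\<^sup>L lborel f = (\<bar>c\<bar>^DIM('a)) *\<^sub>R integral\<^sup>L lborel (\<lambda>x. f (t + c *\<^sub>R x))"
proof -
  have [measurable]: "(\<lambda>x. t + c *\<^sub>R x) \<in> borel_measurable (borel :: 'a measure)" by measurable
  have cp: "\<bar>c\<bar>^DIM('a) > 0" using c by simp
  show "integrable lborel f \<longleftrightarrow> integrable lborel (\<lambda>x. f (t + c *\<^sub>R x))"
  proof -
    have "integrable lborel f \<longleftrightarrow> integrable lborel (\<lambda>x. \<bar>c\<bar> ^ DIM('a) *\<^sub>R f (t + c *\<^sub>R x))"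
      apply (subst lborel_affine[OF c, of t])
      using cp by (simp add: integrable_density integrable_distr_eq)
    also have "\<dots> \<longleftrightarrow> integrable lborel (\<lambda>x. f (t + c *\<^sub>R x))"
    proof
      assume "integrable lborel (\<lambda>x. \<bar>c\<bar> ^ DIM('a) *\<^sub>R f (t + c *\<^sub>R x))"
      then have "integrable lborel (\<lambda>x. inverse (\<bar>c\<bar> ^ DIM('a)) *\<^sub>R (\<bar>c\<bar> ^ DIM('a) *\<^sub>R f (t + c *\<^sub>R x)))"
        by (rule integrable_scaleR_right)
      then show "integrable lborel (\<lambda>x. f (t + c *\<^sub>R x))" using cp by simp
    qed auto
    finally show ?thesis .
  qed
  show "integral\<^sup>L lborel f = (\<bar>c\<bar>^DIM('a)) *\<^sub>R integral\<^sup>L lborel (\<lambda>x. f (t + c *\<^sub>R x))"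
    apply (subst lborel_affine[OF c, of t])
    using cp by (simp add: integral_density integral_distr)
qed




lemma gd_shift:
  fixes m w :: "real^'n"
  assumes s: "s > 0"
  shows "gauss_density m s (m + s *\<^sub>R w) = gauss_density 0 1 w / s ^ CARD('n)"
proof -
  have e: "- (norm (m + s *\<^sub>R w - m))\<^sup>2 / (2 * s\<^sup>2) = - (norm (w - 0))\<^sup>2 / (2 * 1\<^sup>2)"
  proof -
    have "(norm (m + s *\<^sub>R w - m))\<^sup>2 = s\<^sup>2 * (norm w)\<^sup>2" by (simp only: add_diff_cancel_left' norm_scaleR power_mult_distrib power2_abs)
    then show ?thesis using s by simp
  qed
  have "(2 * pi * s\<^sup>2) powr (real CARD('n) / 2) = (2 * pi) powr (real CARD('n) / 2) * (s\<^sup>2) powr (real CARD('n) / 2)"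
    by (rule powr_mult)
  also have "(s\<^sup>2) powr (real CARD('n) / 2) = s ^ CARD('n)"
  proof -
    have "(s\<^sup>2) = s powr 2" using powr_realpow[OF s, of 2] by simp
    then have "(s\<^sup>2) powr (real CARD('n) / 2) = s powr (real CARD('n))" by (simp add: powr_powr)
    also have "\<dots> = s ^ CARD('n)" using s by (simp add: powr_realpow)
    finally show ?thesis .
  qed
  finally have d: "(2 * pi * s\<^sup>2) powr (real CARD('n) / 2) = (2 * pi * 1\<^sup>2) powr (real CARD('n) / 2) * s ^ CARD('n)" by simp
  show ?thesis unfolding gauss_density_def e d by (simp add: divide_divide_eq_left)
qed
lemma gd_affine:
  fixes f :: "real^'n \<Rightarrow> 'b::{banach,second_countable_topology}" and m :: "real^'n"
  assumes s: "s > 0" and [measurable]: "f \<in> borel_measurable borel"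
  shows "integrable lborel (\<lambda>y. gauss_density m s y *\<^sub>R f y) \<longleftrightarrow>
           integrable lborel (\<lambda>w. gauss_density 0 1 w *\<^sub>R f (m + s *\<^sub>R w))"
    and "(\<integral>y. gauss_density m s y *\<^sub>R f y \<partial>lborel) =
           (\<integral>w. gauss_density 0 1 w *\<^sub>R f (m + s *\<^sub>R w) \<partial>lborel)"
proof -
  have sn: "s ^ CARD('n) > 0" using s by simp
  have sn1: "s ^ CARD('n) * inverse (s ^ CARD('n)) = 1" using s by (intro right_inverse) simp
  have eq: "(\<lambda>w. gauss_density m s (m + s *\<^sub>R w) *\<^sub>R f (m + s *\<^sub>R w))
      = (\<lambda>w. inverse (s ^ CARD('n)) *\<^sub>R (gauss_density 0 1 w *\<^sub>R f (m + s *\<^sub>R w)))"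
    by (rule ext) (simp add: gd_shift[OF s] divide_inverse mult.commute)
  have "integrable lborel (\<lambda>y. gauss_density m s y *\<^sub>R f y) \<longleftrightarrow>
      integrable lborel (\<lambda>w. inverse (s ^ CARD('n)) *\<^sub>R (gauss_density 0 1 w *\<^sub>R f (m + s *\<^sub>R w)))"
    using lborel_affine_int(1)[of s "\<lambda>y. gauss_density m s y *\<^sub>R f y" m] s unfolding eq by simp
  also have "\<dots> \<longleftrightarrow> integrable lborel (\<lambda>w. gauss_density 0 1 w *\<^sub>R f (m + s *\<^sub>R w))"
  proof
    assume "integrable lborel (\<lambda>w. inverse (s ^ CARD('n)) *\<^sub>R (gauss_density 0 1 w *\<^sub>R f (m + s *\<^sub>R w)))"
    then have "integrable lborel (\<lambda>w. s ^ CARD('n) *\<^sub>R (inverse (s ^ CARD('n)) *\<^sub>R (gauss_density 0 1 w *\<^sub>R f (m + s *\<^sub>R w))))"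
      by (rule integrable_scaleR_right)
    then show "integrable lborel (\<lambda>w. gauss_density 0 1 w *\<^sub>R f (m + s *\<^sub>R w))" by (simp add: mult.assoc[symmetric] sn1)
  qed (rule integrable_scaleR_right, assumption)
  finally show "integrable lborel (\<lambda>y. gauss_density m s y *\<^sub>R f y) \<longleftrightarrow>
           integrable lborel (\<lambda>w. gauss_density 0 1 w *\<^sub>R f (m + s *\<^sub>R w))" .
  have "(\<integral>y. gauss_density m s y *\<^sub>R f y \<partial>lborel) = s ^ CARD('n) *\<^sub>R
     (\<integral>w. inverse (s ^ CARD('n)) *\<^sub>R (gauss_density 0 1 w *\<^sub>R f (m + s *\<^sub>R w)) \<partial>lborel)"
    using lborel_affine_int(2)[of s "\<lambda>y. gauss_density m s y *\<^sub>R f y" m] s unfolding eq by simp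
  also have "\<dots> = (\<integral>w. gauss_density 0 1 w *\<^sub>R f (m + s *\<^sub>R w) \<partial>lborel)"
    by (subst integral_scaleR_right) (simp only: scaleR_scaleR sn1 scaleR_one)
  finally show "(\<integral>y. gauss_density m s y *\<^sub>R f y \<partial>lborel) =
           (\<integral>w. gauss_density 0 1 w *\<^sub>R f (m + s *\<^sub>R w) \<partial>lborel)" .
qed



lemma gd_sq_bound:
  fixes w :: "real^'n"
  shows "gauss_density 0 1 w * (norm w)\<^sup>2 \<le>
     (4 * (4 * pi) powr (real CARD('n) / 2) / (2 * pi) powr (real CARD('n) / 2)) * gauss_density 0 (sqrt 2) w"
proof -
  define u where "u = (norm w)\<^sup>2 / 4"
  have u0: "u \<ge> 0" unfolding u_def by simp
  have "u \<le> exp u" using exp_ge_add_one_self[of u] by linarith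
  then have "u * exp (- 2 * u) \<le> exp u * exp (- 2 * u)" by (intro mult_right_mono) auto
  also have "\<dots> = exp (- u)" by (simp flip: exp_add)
  finally have key: "(norm w)\<^sup>2 * exp (- (norm w)\<^sup>2 / 2) \<le> 4 * exp (- (norm w)\<^sup>2 / 4)"
    unfolding u_def by (simp add: field_simps)
  let ?A = "(2 * pi) powr (real CARD('n) / 2)" and ?B = "(4 * pi) powr (real CARD('n) / 2)"
  have A: "?A > 0" and B: "?B > 0" by auto
  have g1: "gauss_density 0 1 w = exp (- (norm w)\<^sup>2 / 2) / ?A"
    unfolding gauss_density_def by simp
  have g2: "gauss_density 0 (sqrt 2) w = exp (- (norm w)\<^sup>2 / 4) / ?B"
    unfolding gauss_density_def by simp
  show ?thesis unfolding g1 g2 using key A B by (simp add: field_simps)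
qed

lemma gd_int_sq: "integrable lborel (\<lambda>w::real^'n. gauss_density 0 1 w * (norm w)\<^sup>2)"
proof -
  let ?C = "4 * (4 * pi) powr (real CARD('n) / 2) / (2 * pi) powr (real CARD('n) / 2)"
  have i1: "integrable lborel (\<lambda>w::real^'n. ?C * gauss_density 0 (sqrt 2) w)"
    by (intro integrable_mult_right gd_integrable) simp
  have b: "norm (gauss_density 0 1 x * (norm x)\<^sup>2) \<le> norm (?C * gauss_density 0 (sqrt 2) x)" for x :: "real^'n"
  proof -
    have "gauss_density 0 1 x * (norm x)\<^sup>2 \<le> ?C * gauss_density 0 (sqrt 2) x"
      by (rule gd_sq_bound)
    then show ?thesis by (simp add: gd_nonneg abs_mult)
  qed
  show ?thesis
    by (rule Bochner_Integration.integrable_bound[OF i1]) (use b in auto)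
qed

lemma gd_int_1: "integrable lborel (\<lambda>w::real^'n. gauss_density 0 1 w)"
  by (rule gd_integrable) simp

lemma norm_le_sq: "norm w \<le> 1 + (norm w)\<^sup>2"
proof (cases "norm w \<le> 1")
  case True then show ?thesis by (simp add: add_increasing2)
next
  case False
  then have "norm w * 1 \<le> norm w * norm w" by (intro mult_left_mono) auto
  then show ?thesis by (simp add: power2_eq_square)
qed

lemma gd_int_norm: "integrable lborel (\<lambda>w::real^'n. gauss_density 0 1 w * norm w)"
proof -
  have i1: "integrable lborel (\<lambda>w::real^'n. gauss_density 0 1 w + gauss_density 0 1 w * (norm w)\<^sup>2)"
    using gd_int_1 gd_int_sq by (rule Bochner_Integration.integrable_add)
  have b: "norm (gauss_density 0 1 x * norm x) \<le> norm (gauss_density 0 1 x + gauss_density 0 1 x * (norm x)\<^sup>2)" for x :: "real^'n"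
  proof -
    have "gauss_density 0 1 x * norm x \<le> gauss_density 0 1 x * (1 + (norm x)\<^sup>2)"
      by (rule mult_left_mono) (simp_all add: norm_le_sq gd_nonneg)
    then show ?thesis by (simp add: gd_nonneg distrib_left abs_mult)
  qed
  show ?thesis
    by (rule Bochner_Integration.integrable_bound[OF i1]) (use b in auto)
qed

lemma gd_neg: "gauss_density 0 1 (- w) = gauss_density 0 1 w"
  unfolding gauss_density_def by simp

lemma gd_odd: "(\<integral>w. gauss_density 0 1 w * (v \<bullet> (w::real^'n)) \<partial>lborel) = 0"
proof -
  have "(\<integral>w. gauss_density 0 1 w * (v \<bullet> (w::real^'n)) \<partial>lborel)
     = (\<bar>-1\<bar>^DIM(real^'n)) *\<^sub>R (\<integral>w. gauss_density 0 1 (0 + (-1) *\<^sub>R w) * (v \<bullet> (0 + (-1) *\<^sub>R w)) \<partial>lborel)"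
    by (rule lborel_affine_int(2)) auto
  also have "\<dots> = - (\<integral>w. gauss_density 0 1 w * (v \<bullet> (w::real^'n)) \<partial>lborel)"
    by (simp add: gd_neg)
  finally show ?thesis by simp
qed



lemma norm_add_sq: "(norm (m + s *\<^sub>R (w::'a::real_inner)))\<^sup>2 = (norm m)\<^sup>2 + 2 * s * (m \<bullet> w) + s\<^sup>2 * (norm w)\<^sup>2"
  by (simp only: power2_norm_eq_inner inner_add_left inner_add_right inner_scaleR_left inner_scaleR_right inner_commute[of w m]) (simp add: algebra_simps power2_eq_square)

lemma gd_ne0: "s \<noteq> 0 \<Longrightarrow> gauss_density m s y \<noteq> 0"
  using gd_pos[of s m y] by simp

lemma E_formula:
  fixes m :: "real^'n"
  assumes s: "s > 0" and [measurable]: "r \<in> borel_measurable borel"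
  shows "(\<integral>y. r y \<partial>gauss_measure m s) = (\<integral>w. gauss_density 0 1 w * r (m + s *\<^sub>R w) \<partial>lborel)"
proof -
  have "(\<integral>y. r y \<partial>gauss_measure m s) = (\<integral>y. gauss_density m s y *\<^sub>R r y \<partial>lborel)"
    unfolding gauss_measure_def by (subst integral_real_density) (auto simp: gd_nonneg)
  also have "\<dots> = (\<integral>w. gauss_density 0 1 w *\<^sub>R r (m + s *\<^sub>R w) \<partial>lborel)"
    by (rule gd_affine(2)[OF s]) measurable
  finally show ?thesis by simp
qed

lemma KL_formula:
  fixes m :: "real^'n"
  assumes s: "s > 0"
  shows "KL_divergence (exp 1) (gauss_measure 0 1) (gauss_measure m s) =
     (norm m)\<^sup>2 / 2 + ((ln ((2 * pi) powr (real CARD('n) / 2)) - ln ((2 * pi * s\<^sup>2) powr (real CARD('n) / 2)))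
        + (s\<^sup>2 - 1) / 2 * (\<integral>w. gauss_density 0 1 w * (norm (w::real^'n))\<^sup>2 \<partial>lborel))"
proof -
  define c0 where "c0 = ln ((2 * pi) powr (real CARD('n) / 2)) - ln ((2 * pi * s\<^sup>2) powr (real CARD('n) / 2))"
  define V where "V = (\<integral>w. gauss_density 0 1 w * (norm (w::real^'n))\<^sup>2 \<partial>lborel)"
  define h where "h y = (norm y)\<^sup>2 / 2 - (norm (y - m))\<^sup>2 / (2 * s\<^sup>2) + c0" for y :: "real^'n"
  have [measurable]: "h \<in> borel_measurable borel" unfolding h_def[abs_def] by measurable
  have "KL_divergence (exp 1) (gauss_measure 0 1) (gauss_measure m s) =
      (\<integral>y. gauss_density m s y * log (exp 1) (gauss_density m s y / gauss_density 0 1 y) \<partial>lborel)"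
    unfolding gauss_measure_def
    by (rule lborel.KL_density_density) (auto simp: gd_nonneg gd_ne0)
  also have "\<dots> = (\<integral>y. gauss_density m s y *\<^sub>R h y \<partial>lborel)"
  proof (rule Bochner_Integration.integral_cong[OF refl])
    fix y :: "real^'n"
    have "ln (gauss_density m s y / gauss_density 0 1 y) = h y"
      using s unfolding gauss_density_def h_def c0_def
      by (simp add: ln_divide_pos ln_mult algebra_simps)
    then show "gauss_density m s y * log (exp 1) (gauss_density m s y / gauss_density 0 1 y) = gauss_density m s y *\<^sub>R h y"
      by (simp add: log_def)
  qed
  also have "\<dots> = (\<integral>w. gauss_density 0 1 w *\<^sub>R h (m + s *\<^sub>R w) \<partial>lborel)"
    by (rule gd_affine(2)[OF s]) measurable
  also have "\<dots> = (\<integral>w. ((norm m)\<^sup>2 / 2 + c0) * gauss_density 0 1 w + (s * (gauss_density 0 1 w * (m \<bullet> w))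
                     + ((s\<^sup>2 - 1) / 2) * (gauss_density 0 1 w * (norm w)\<^sup>2)) \<partial>lborel)"
  proof (rule Bochner_Integration.integral_cong[OF refl])
    fix w :: "real^'n"
    have "h (m + s *\<^sub>R w) = ((norm m)\<^sup>2 / 2 + c0) + s * (m \<bullet> w) + ((s\<^sup>2 - 1) / 2) * (norm w)\<^sup>2"
    proof -
      have "(norm (m + s *\<^sub>R w - m))\<^sup>2 = s\<^sup>2 * (norm w)\<^sup>2"
        by (simp only: add_diff_cancel_left' norm_scaleR power_mult_distrib power2_abs)
      then have "(norm (m + s *\<^sub>R w - m))\<^sup>2 / (2 * s\<^sup>2) = (norm w)\<^sup>2 / 2" using s by simp
      then have "h (m + s *\<^sub>R w) = (norm (m + s *\<^sub>R w))\<^sup>2 / 2 - (norm w)\<^sup>2 / 2 + c0"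
        by (simp only: h_def)
      then show ?thesis unfolding norm_add_sq by (simp add: field_simps)
    qed
    then show "gauss_density 0 1 w *\<^sub>R h (m + s *\<^sub>R w) = ((norm m)\<^sup>2 / 2 + c0) * gauss_density 0 1 w + (s * (gauss_density 0 1 w * (m \<bullet> w))
                     + ((s\<^sup>2 - 1) / 2) * (gauss_density 0 1 w * (norm w)\<^sup>2))"
      by (simp add: algebra_simps)
  qed
  also have "\<dots> = ((norm m)\<^sup>2 / 2 + c0) * 1 + (s * 0 + ((s\<^sup>2 - 1) / 2) * V)"
  proof -
    have i2: "integrable lborel (\<lambda>w::real^'n. gauss_density 0 1 w * (m \<bullet> w))"
    proof (rule Bochner_Integration.integrable_bound[OF integrable_mult_right[OF gd_int_norm, of "norm m"]])
      show "AE x in lborel. norm (gauss_density 0 1 x * (m \<bullet> x)) \<le> norm (norm m * (gauss_density 0 1 x * norm (x::real^'n)))"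
      proof (intro AE_I2)
        fix x :: "real^'n"
        have "gauss_density 0 1 x * \<bar>m \<bullet> x\<bar> \<le> gauss_density 0 1 x * (norm m * norm x)"
          by (rule mult_left_mono) (simp_all add: Cauchy_Schwarz_ineq2 gd_nonneg)
        then show "norm (gauss_density 0 1 x * (m \<bullet> x)) \<le> norm (norm m * (gauss_density 0 1 x * norm x))"
          by (simp add: abs_mult gd_nonneg mult.left_commute)
      qed
    qed measurable
    have i1: "integrable lborel (\<lambda>w::real^'n. ((norm m)\<^sup>2 / 2 + c0) * gauss_density 0 1 w)"
      using gd_int_1 by (rule integrable_mult_right)
    have i2': "integrable lborel (\<lambda>w::real^'n. s * (gauss_density 0 1 w * (m \<bullet> w)))"
      using i2 by (rule integrable_mult_right)
    have i3: "integrable lborel (\<lambda>w::real^'n. ((s\<^sup>2 - 1) / 2) * (gauss_density 0 1 w * (norm w)\<^sup>2))"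
      using gd_int_sq by (rule integrable_mult_right)
    have "(\<integral>w. ((norm m)\<^sup>2 / 2 + c0) * gauss_density 0 1 w + (s * (gauss_density 0 1 w * (m \<bullet> (w::real^'n)))
                     + ((s\<^sup>2 - 1) / 2) * (gauss_density 0 1 w * (norm w)\<^sup>2)) \<partial>lborel)
       = (\<integral>w. ((norm m)\<^sup>2 / 2 + c0) * gauss_density 0 1 (w::real^'n) \<partial>lborel) + ((\<integral>w. s * (gauss_density 0 1 w * (m \<bullet> (w::real^'n))) \<partial>lborel)
                     + (\<integral>w. ((s\<^sup>2 - 1) / 2) * (gauss_density 0 1 w * (norm (w::real^'n))\<^sup>2) \<partial>lborel))"
      using i1 i2' i3 by (simp only: Bochner_Integration.integral_add Bochner_Integration.integrable_add)
    also have "\<dots> = ((norm m)\<^sup>2 / 2 + c0) * 1 + (s * 0 + ((s\<^sup>2 - 1) / 2) * V)"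
      unfolding integral_mult_right_zero gd_odd V_def using gd_integral[of 1 "0::real^'n"] by simp
    finally show ?thesis .
  qed
  finally show ?thesis unfolding c0_def V_def by simp
qed



context
  fixes r :: "real^'n \<Rightarrow> real" and g :: "real^'n \<Rightarrow> real^'n" and M :: real
  assumes rd: "\<And>y. (r has_derivative (\<lambda>h. g y \<bullet> h)) (at y)"
    and gc: "continuous_on UNIV g"
    and gM: "\<And>y. norm (g y) \<le> M"
begin

lemma r_cont: "continuous_on UNIV r"
  using rd by (intro continuous_at_imp_continuous_on) (auto intro: has_derivative_continuous)

lemma r_meas[measurable]: "r \<in> borel_measurable borel"
  using r_cont by (rule borel_measurable_continuous_onI)

lemma g_meas[measurable]: "g \<in> borel_measurable borel"
  using gc by (rule borel_measurable_continuous_onI)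

lemma M_nonneg: "M \<ge> 0"
  using gM[of 0] norm_ge_zero order_trans by blast

lemma r_lip: "\<bar>r x - r y\<bar> \<le> M * norm (x - y)"
proof -
  have "norm (r x - r y) \<le> M * norm (x - y)"
  proof (rule differentiable_bound[where S=UNIV and f'="\<lambda>x h. g x \<bullet> h"])
    show "\<And>x. x \<in> UNIV \<Longrightarrow> (r has_derivative (\<lambda>h. g x \<bullet> h)) (at x within UNIV)"
      using rd by simp
    show "onorm (\<lambda>h. g x \<bullet> h) \<le> M" for x
    proof (rule onorm_le)
      fix h
      have "norm (g x \<bullet> h) \<le> norm (g x) * norm h" by (simp add: Cauchy_Schwarz_ineq2)
      also have "\<dots> \<le> M * norm h" by (rule mult_right_mono[OF gM]) simp
      finally show "norm (g x \<bullet> h) \<le> M * norm h" .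
    qed
  qed auto
  then show ?thesis by simp
qed

lemma r_rem: "\<bar>r (p + h) - r p - g p \<bullet> h\<bar> \<le> 2 * M * norm h"
proof -
  have "\<bar>r (p + h) - r p - g p \<bullet> h\<bar> \<le> \<bar>r (p + h) - r p\<bar> + \<bar>g p \<bullet> h\<bar>" by linarith
  also have "\<bar>r (p + h) - r p\<bar> \<le> M * norm h" using r_lip[of "p + h" p] by simp
  also have "\<bar>g p \<bullet> h\<bar> \<le> M * norm h"
    using Cauchy_Schwarz_ineq2[of "g p" h] mult_right_mono[OF gM[of p], of "norm h"] by simp
  finally show ?thesis by simp
qed

lemma F_int: "integrable lborel (\<lambda>w. gauss_density 0 1 w * r (m + s *\<^sub>R w))"
proof -
  have i1: "integrable lborel (\<lambda>w::real^'n. (\<bar>r 0\<bar> + M * norm m) * gauss_density 0 1 w + (M * \<bar>s\<bar>) * (gauss_density 0 1 w * norm w))"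
    by (intro Bochner_Integration.integrable_add integrable_mult_right gd_int_1 gd_int_norm)
  have b: "norm (gauss_density 0 1 w * r (m + s *\<^sub>R w)) \<le>
     norm ((\<bar>r 0\<bar> + M * norm m) * gauss_density 0 1 w + (M * \<bar>s\<bar>) * (gauss_density 0 1 w * norm w))" for w
  proof -
    have "\<bar>r (m + s *\<^sub>R w)\<bar> \<le> \<bar>r 0\<bar> + M * norm (m + s *\<^sub>R w)"
      using r_lip[of "m + s *\<^sub>R w" 0] by simp
    also have "M * norm (m + s *\<^sub>R w) \<le> M * (norm m + \<bar>s\<bar> * norm w)"
      using M_nonneg norm_triangle_ineq[of m "s *\<^sub>R w"] by (intro mult_left_mono) auto
    finally have "\<bar>r (m + s *\<^sub>R w)\<bar> \<le> (\<bar>r 0\<bar> + M * norm m) + (M * \<bar>s\<bar>) * norm w"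
      by (simp add: algebra_simps)
    then have "gauss_density 0 1 w * \<bar>r (m + s *\<^sub>R w)\<bar> \<le> gauss_density 0 1 w * ((\<bar>r 0\<bar> + M * norm m) + (M * \<bar>s\<bar>) * norm w)"
      by (rule mult_left_mono) (simp add: gd_nonneg)
    moreover have "0 \<le> (\<bar>r 0\<bar> + M * norm m) * gauss_density 0 1 w + (M * \<bar>s\<bar>) * (gauss_density 0 1 w * norm w)"
      using M_nonneg gd_nonneg by (intro add_nonneg_nonneg mult_nonneg_nonneg) auto
    ultimately show ?thesis by (simp add: abs_mult gd_nonneg algebra_simps)
  qed
  show ?thesis
    by (rule Bochner_Integration.integrable_bound[OF i1]) (use b in auto)
qed

lemma GE_int: "integrable lborel (\<lambda>w. gauss_density 0 1 w *\<^sub>R g (m + s *\<^sub>R w))"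
proof -
  have i1: "integrable lborel (\<lambda>w::real^'n. M * gauss_density 0 1 w)"
    by (intro integrable_mult_right gd_int_1)
  have b: "norm (gauss_density 0 1 w *\<^sub>R g (m + s *\<^sub>R w)) \<le> norm (M * gauss_density 0 1 w)" for w
  proof -
    have "gauss_density 0 1 w * norm (g (m + s *\<^sub>R w)) \<le> gauss_density 0 1 w * M"
      by (rule mult_left_mono[OF gM]) (simp add: gd_nonneg)
    then show ?thesis using M_nonneg by (simp add: gd_nonneg abs_mult mult.commute)
  qed
  show ?thesis
    by (rule Bochner_Integration.integrable_bound[OF i1]) (use b in auto)
qed

lemma F_deriv:
  "((\<lambda>m. \<integral>w. gauss_density 0 1 w * r (m + s *\<^sub>R w) \<partial>lborel) has_derivative
     (\<lambda>h. (\<integral>w. gauss_density 0 1 w *\<^sub>R g (a + s *\<^sub>R w) \<partial>lborel) \<bullet> h)) (at a)"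
proof -
  define F where "F m = (\<integral>w. gauss_density 0 1 w * r (m + s *\<^sub>R w) \<partial>lborel)" for m
  define G where "G = (\<integral>w. gauss_density 0 1 w *\<^sub>R g (a + s *\<^sub>R w) \<partial>lborel)"
  define Q where "Q h w = gauss_density 0 1 w * ((r (a + s *\<^sub>R w + h) - r (a + s *\<^sub>R w) - g (a + s *\<^sub>R w) \<bullet> h) / norm h)"
    for h w :: "real^'n"
  have eq: "norm (F (a + h) - F a - G \<bullet> h) / norm h = \<bar>\<integral>w. Q h w \<partial>lborel\<bar>" if h: "h \<noteq> 0" for h
  proof -
    have "F (a + h) - F a - G \<bullet> h = (\<integral>w. gauss_density 0 1 w * r ((a + h) + s *\<^sub>R w) - gauss_density 0 1 w * r (a + s *\<^sub>R w)
           - gauss_density 0 1 w * (g (a + s *\<^sub>R w) \<bullet> h) \<partial>lborel)"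
    proof -
      have "G \<bullet> h = (\<integral>w. (gauss_density 0 1 w *\<^sub>R g (a + s *\<^sub>R w)) \<bullet> h \<partial>lborel)"
        unfolding G_def by (rule integral_inner_left[symmetric]) (rule GE_int)
      also have "\<dots> = (\<integral>w. gauss_density 0 1 w * (g (a + s *\<^sub>R w) \<bullet> h) \<partial>lborel)" by simp
      finally have G: "G \<bullet> h = \<dots>" .
      have i3: "integrable lborel (\<lambda>w. gauss_density 0 1 w * (g (a + s *\<^sub>R w) \<bullet> h))"
        using integrable_inner_left[OF GE_int[of a s], of h] by simp
      show ?thesis unfolding F_def G
        using F_int[of "a + h" s] F_int[of a s] i3
        by (simp add: Bochner_Integration.integral_diff)
    qed
    also have "\<dots> = (\<integral>w. norm h * Q h w \<partial>lborel)"
    proof (intro Bochner_Integration.integral_cong refl)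
      fix w :: "real^'n"
      have e: "(a + h) + s *\<^sub>R w = a + s *\<^sub>R w + h" by (simp add: algebra_simps)
      have n: "norm h \<noteq> 0" using h by simp
      show "gauss_density 0 1 w * r ((a + h) + s *\<^sub>R w) - gauss_density 0 1 w * r (a + s *\<^sub>R w)
           - gauss_density 0 1 w * (g (a + s *\<^sub>R w) \<bullet> h) = norm h * Q h w"
        unfolding e Q_def using n by (simp add: field_simps)
    qed
    also have "\<dots> = norm h * (\<integral>w. Q h w \<partial>lborel)" by simp
    finally show ?thesis using h by (simp add: abs_mult)
  qed
  have lim: "((\<lambda>h. \<integral>w. Q h w \<partial>lborel) \<longlongrightarrow> 0) (at 0)"
  proof (unfold tendsto_at_iff_sequentially, intro allI impI)
    fix X :: "nat \<Rightarrow> real^'n"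
    assume X0: "\<forall>i. X i \<in> UNIV - {0}" and X: "X \<longlonglongrightarrow> 0"
    have XF: "filterlim X (at 0) sequentially"
      using X0 X by (auto simp: filterlim_at)
    have "(\<lambda>i. \<integral>w. Q (X i) w \<partial>lborel) \<longlonglongrightarrow> (\<integral>(w::real^'n). (0::real) \<partial>lborel)"
    proof (rule integral_dominated_convergence[where w="\<lambda>w. 2 * M * gauss_density 0 1 w"])
      show "integrable lborel (\<lambda>w::real^'n. 2 * M * gauss_density 0 1 w)"
        by (intro integrable_mult_right gd_int_1)
      show "AE w in lborel. (\<lambda>i. Q (X i) w) \<longlonglongrightarrow> 0"
      proof (intro AE_I2)
        fix w :: "real^'n"
        define p where "p = a + s *\<^sub>R w"
        have "((\<lambda>h. norm (r (p + h) - r p - g p \<bullet> h) / norm h) \<longlongrightarrow> 0) (at 0)"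
          using rd[of p] by (simp add: has_derivative_at)
        then have "((\<lambda>h. (r (p + h) - r p - g p \<bullet> h) / norm h) \<longlongrightarrow> 0) (at 0)"
          by (subst tendsto_rabs_zero_iff[symmetric]) simp
        from filterlim_compose[OF this XF]
        have "(\<lambda>i. (r (p + X i) - r p - g p \<bullet> X i) / norm (X i)) \<longlonglongrightarrow> 0" .
        then have "(\<lambda>i. gauss_density 0 1 w * ((r (p + X i) - r p - g p \<bullet> X i) / norm (X i))) \<longlonglongrightarrow> 0"
          by (rule tendsto_mult_right_zero)
        then show "(\<lambda>i. Q (X i) w) \<longlonglongrightarrow> 0" unfolding Q_def p_def .
      qed
      show "AE w in lborel. norm (Q (X i) w) \<le> 2 * M * gauss_density 0 1 w" for i
      proof (intro AE_I2)
        fix w :: "real^'n"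
        have n: "norm (X i) > 0" using X0 by auto
        have "\<bar>r (a + s *\<^sub>R w + X i) - r (a + s *\<^sub>R w) - g (a + s *\<^sub>R w) \<bullet> X i\<bar> / norm (X i) \<le> 2 * M"
          using r_rem[of "a + s *\<^sub>R w" "X i"] n by (simp add: divide_le_eq)
        then have "gauss_density 0 1 w * (\<bar>r (a + s *\<^sub>R w + X i) - r (a + s *\<^sub>R w) - g (a + s *\<^sub>R w) \<bullet> X i\<bar> / norm (X i))
            \<le> gauss_density 0 1 w * (2 * M)"
          by (rule mult_left_mono) (simp add: gd_nonneg)
        then show "norm (Q (X i) w) \<le> 2 * M * gauss_density 0 1 w"
          unfolding Q_def by (simp add: abs_mult gd_nonneg mult.commute)
      qed
    qed (auto simp: Q_def)
    then show "((\<lambda>h. \<integral>w. Q h w \<partial>lborel) \<circ> X) \<longlonglongrightarrow> 0" by (simp add: comp_def)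
  qed
  have lim2: "((\<lambda>h. norm (F (a + h) - F a - G \<bullet> h) / norm h) \<longlongrightarrow> 0) (at 0)"
  proof (unfold tendsto_at_iff_sequentially, intro allI impI)
    fix X :: "nat \<Rightarrow> real^'n"
    assume X0: "\<forall>i. X i \<in> UNIV - {0}" and X: "X \<longlonglongrightarrow> 0"
    have "(\<lambda>i. \<bar>\<integral>w. Q (X i) w \<partial>lborel\<bar>) \<longlonglongrightarrow> 0"
      using lim[unfolded tendsto_at_iff_sequentially] X0 X
      by (intro tendsto_rabs_zero) (auto simp: comp_def)
    moreover have "\<And>i. norm (F (a + X i) - F a - G \<bullet> X i) / norm (X i) = \<bar>\<integral>w. Q (X i) w \<partial>lborel\<bar>"
      using X0 eq by auto
    ultimately show "((\<lambda>h. norm (F (a + h) - F a - G \<bullet> h) / norm h) \<circ> X) \<longlonglongrightarrow> 0"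
      by (simp add: comp_def)
  qed
  have "(F has_derivative (\<lambda>h. G \<bullet> h)) (at a)"
    unfolding has_derivative_at using lim2 by (simp add: bounded_linear_inner_right)
  then show ?thesis unfolding F_def G_def .
qed

lemma GE_lim:
  "((\<lambda>s. \<integral>w. gauss_density 0 1 w *\<^sub>R g (a + s *\<^sub>R w) \<partial>lborel) \<longlongrightarrow> g a) (at_right 0)"
proof (unfold tendsto_at_iff_sequentially, intro allI impI)
  fix X :: "nat \<Rightarrow> real"
  assume X: "X \<longlonglongrightarrow> 0"
  have "(\<lambda>i. \<integral>w. gauss_density 0 1 w *\<^sub>R g (a + X i *\<^sub>R w) \<partial>lborel) \<longlonglongrightarrow> (\<integral>w. gauss_density 0 1 (w::real^'n) *\<^sub>R g a \<partial>lborel)"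
  proof (rule integral_dominated_convergence[where w="\<lambda>w. M * gauss_density 0 1 w"])
    show "integrable lborel (\<lambda>w::real^'n. M * gauss_density 0 1 w)"
      by (intro integrable_mult_right gd_int_1)
    show "AE w in lborel. (\<lambda>i. gauss_density 0 1 w *\<^sub>R g (a + X i *\<^sub>R w)) \<longlonglongrightarrow> gauss_density 0 1 w *\<^sub>R g a"
    proof (intro AE_I2)
      fix w :: "real^'n"
      have "(\<lambda>i. a + X i *\<^sub>R w) \<longlonglongrightarrow> a + 0 *\<^sub>R w"
        by (intro tendsto_intros X)
      then have "(\<lambda>i. g (a + X i *\<^sub>R w)) \<longlonglongrightarrow> g a"
        using gc by (intro isCont_tendsto_compose[where g=g]) (auto simp: continuous_on_eq_continuous_at)
      then show "(\<lambda>i. gauss_density 0 1 w *\<^sub>R g (a + X i *\<^sub>R w)) \<longlonglongrightarrow> gauss_density 0 1 w *\<^sub>R g a"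
        by (intro tendsto_intros)
    qed
    show "AE w in lborel. norm (gauss_density 0 1 w *\<^sub>R g (a + X i *\<^sub>R w)) \<le> M * gauss_density 0 1 w" for i
    proof (intro AE_I2)
      fix w :: "real^'n"
      have "gauss_density 0 1 w * norm (g (a + X i *\<^sub>R w)) \<le> gauss_density 0 1 w * M"
        by (rule mult_left_mono[OF gM]) (simp add: gd_nonneg)
      then show "norm (gauss_density 0 1 w *\<^sub>R g (a + X i *\<^sub>R w)) \<le> M * gauss_density 0 1 w"
        by (simp add: gd_nonneg mult.commute)
    qed
  qed auto
  also have "(\<integral>w. gauss_density 0 1 (w::real^'n) *\<^sub>R g a \<partial>lborel) = g a"
    by (subst integral_scaleR_left) (use gd_int_1 gd_integral[of 1 "0::real^'n"] in auto)
  finally show "((\<lambda>s. \<integral>w. gauss_density 0 1 w *\<^sub>R g (a + s *\<^sub>R w) \<partial>lborel) \<circ> X) \<longlonglongrightarrow> g a"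
    by (simp add: comp_def)
qed

end


lemma grad_inner:
  fixes L :: "'p::euclidean_space \<Rightarrow> 'b::real_inner"
  assumes L: "linear L"
  shows "(\<Sum>b\<in>Basis. (v \<bullet> L b) *\<^sub>R b) \<bullet> h = v \<bullet> L h"
proof -
  have "L h = L (\<Sum>b\<in>Basis. (h \<bullet> b) *\<^sub>R b)" by (simp add: euclidean_representation)
  also have "\<dots> = (\<Sum>b\<in>Basis. (h \<bullet> b) *\<^sub>R L b)"
    using L by (simp add: linear_sum linear_scale)
  finally have "v \<bullet> L h = (\<Sum>b\<in>Basis. (h \<bullet> b) * (v \<bullet> L b))"
    by (simp add: inner_sum_right)
  moreover have "(\<Sum>b\<in>Basis. (v \<bullet> L b) *\<^sub>R b) \<bullet> h = (\<Sum>b\<in>Basis. (h \<bullet> b) * (v \<bullet> L b))"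
    unfolding inner_sum_left inner_scaleR_left by (simp add: inner_commute mult.commute)
  ultimately show ?thesis by simp
qed

theorem proposition5:
  fixes \<beta> M :: real
    and \<mu> :: "'p::euclidean_space \<Rightarrow> real^'n"
    and r :: "real^'n \<Rightarrow> real"
    and \<theta> :: "'p"
  assumes beta_pos: "\<beta> > 0"
    and mu_diff: "\<And>t. \<mu> differentiable (at t)"
    and r_C2: "\<exists>g H. (\<forall>y. (r has_derivative (\<lambda>h. g y \<bullet> h)) (at y))
                   \<and> (\<forall>y. (g has_derivative blinfun_apply (H y)) (at y))
                   \<and> continuous_on UNIV (H :: real^'n \<Rightarrow> ((real^'n) \<Rightarrow>\<^sub>L (real^'n)))
                   \<and> (\<forall>y. norm (g y) \<le> M)"
  shows "\<exists>G G0.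
           (\<forall>\<sigma>>0. ((\<lambda>t. J_obj \<beta> \<mu> r \<sigma> t) has_derivative (\<lambda>h. G \<sigma> \<bullet> h)) (at \<theta>))
         \<and> ((\<lambda>t. r (\<mu> t) - \<beta> / 2 * (norm (\<mu> t))\<^sup>2) has_derivative (\<lambda>h. G0 \<bullet> h)) (at \<theta>)
         \<and> (G \<longlongrightarrow> G0) (at_right 0)"
proof -
  obtain g H where rd': "\<forall>y. (r has_derivative (\<lambda>h. g y \<bullet> h)) (at y)"
    and gd: "\<forall>y. (g has_derivative blinfun_apply (H y)) (at y)"
    and gM': "\<forall>y. norm (g y) \<le> M"
    using r_C2 by blast
  have rd: "\<And>y. (r has_derivative (\<lambda>h. g y \<bullet> h)) (at y)" using rd' by blast
  have gM: "\<And>y. norm (g y) \<le> M" using gM' by blast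
  have gc: "continuous_on UNIV g"
    using gd by (intro continuous_at_imp_continuous_on) (auto intro: has_derivative_continuous)
  note rmeas = r_meas[OF rd gc gM]
  obtain D where mud: "(\<mu> has_derivative D) (at \<theta>)"
    using mu_diff[of \<theta>] unfolding differentiable_def by blast
  have linD: "linear D" using mud has_derivative_bounded_linear bounded_linear.linear by blast
  define a where "a = \<mu> \<theta>"
  define GE where "GE \<sigma> = (\<integral>w. gauss_density 0 1 w *\<^sub>R g (a + \<sigma> *\<^sub>R w) \<partial>lborel)" for \<sigma>
  define grad where "grad v = (\<Sum>b\<in>Basis. (v \<bullet> D b) *\<^sub>R b)" for v
  have gi: "grad v \<bullet> h = v \<bullet> D h" for v h
    unfolding grad_def by (rule grad_inner[OF linD])
  define G where "G \<sigma> = grad (GE \<sigma> - \<beta> *\<^sub>R a)" for \<sigma>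
  define G0 where "G0 = grad (g a - \<beta> *\<^sub>R a)"
  have nsq: "((\<lambda>t. (norm (\<mu> t))\<^sup>2) has_derivative (\<lambda>h. 2 * (a \<bullet> D h))) (at \<theta>)"
  proof -
    have "((\<lambda>t. \<mu> t \<bullet> \<mu> t) has_derivative (\<lambda>h. \<mu> \<theta> \<bullet> D h + D h \<bullet> \<mu> \<theta>)) (at \<theta>)"
      by (rule has_derivative_inner[OF mud mud])
    then show ?thesis
      unfolding a_def power2_norm_eq_inner by (simp add: inner_commute)
  qed
  have part1: "((\<lambda>t. J_obj \<beta> \<mu> r \<sigma> t) has_derivative (\<lambda>h. G \<sigma> \<bullet> h)) (at \<theta>)" if s: "\<sigma> > 0" for \<sigma>
  proof -
    define K where "K = (ln ((2 * pi) powr (real CARD('n) / 2)) - ln ((2 * pi * \<sigma>\<^sup>2) powr (real CARD('n) / 2)))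
        + (\<sigma>\<^sup>2 - 1) / 2 * (\<integral>w. gauss_density 0 1 w * (norm (w::real^'n))\<^sup>2 \<partial>lborel)"
    define F where "F m = (\<integral>w. gauss_density 0 1 w * r (m + \<sigma> *\<^sub>R w) \<partial>lborel)" for m
    have J: "(\<lambda>t. J_obj \<beta> \<mu> r \<sigma> t) = (\<lambda>t. F (\<mu> t) - \<beta> * (1 / 2 * (norm (\<mu> t))\<^sup>2 + K))"
      unfolding J_obj_def F_def K_def
      using E_formula[OF s rmeas] KL_formula[OF s, where 'n='n] by simp
    have Fd: "(F has_derivative (\<lambda>h. GE \<sigma> \<bullet> h)) (at (\<mu> \<theta>))"
      unfolding F_def GE_def a_def by (rule F_deriv[OF rd gc gM])
    have "((\<lambda>t. F (\<mu> t) - \<beta> * (1 / 2 * (norm (\<mu> t))\<^sup>2 + K)) has_derivative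
        (\<lambda>h. GE \<sigma> \<bullet> D h - \<beta> * (1 / 2 * (2 * (a \<bullet> D h)) + 0))) (at \<theta>)"
      by (intro has_derivative_diff has_derivative_compose[OF mud Fd] has_derivative_mult_right
          has_derivative_add nsq has_derivative_const) 
    then show ?thesis unfolding J
    proof (rule has_derivative_eq_rhs)
      show "(\<lambda>h. GE \<sigma> \<bullet> D h - \<beta> * (1 / 2 * (2 * (a \<bullet> D h)) + 0)) = (\<lambda>h. G \<sigma> \<bullet> h)"
        unfolding G_def gi by (simp add: inner_diff_left algebra_simps)
    qed
  qed
  have part2: "((\<lambda>t. r (\<mu> t) - \<beta> / 2 * (norm (\<mu> t))\<^sup>2) has_derivative (\<lambda>h. G0 \<bullet> h)) (at \<theta>)"
  proof -
    have rd2: "(r has_derivative (\<lambda>h. g (\<mu> \<theta>) \<bullet> h)) (at (\<mu> \<theta>))" by (rule rd)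
    have "((\<lambda>t. r (\<mu> t) - \<beta> / 2 * (norm (\<mu> t))\<^sup>2) has_derivative
        (\<lambda>h. g (\<mu> \<theta>) \<bullet> D h - \<beta> / 2 * (2 * (a \<bullet> D h)))) (at \<theta>)"
      by (intro has_derivative_diff has_derivative_compose[OF mud rd2] has_derivative_mult_right nsq)
    then show ?thesis
    proof (rule has_derivative_eq_rhs)
      show "(\<lambda>h. g (\<mu> \<theta>) \<bullet> D h - \<beta> / 2 * (2 * (a \<bullet> D h))) = (\<lambda>h. G0 \<bullet> h)"
        unfolding G0_def gi a_def by (simp add: inner_diff_left algebra_simps)
    qed
  qed
  have part3: "(G \<longlongrightarrow> G0) (at_right 0)"
  proof -
    have "(GE \<longlongrightarrow> g a) (at_right 0)"
      unfolding GE_def by (rule GE_lim[OF rd gc gM])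
    then have "((\<lambda>\<sigma>. grad (GE \<sigma> - \<beta> *\<^sub>R a)) \<longlongrightarrow> grad (g a - \<beta> *\<^sub>R a)) (at_right 0)"
      unfolding grad_def by (intro tendsto_intros)
    then show ?thesis unfolding G_def[abs_def] G0_def .
  qed
  show ?thesis using part1 part2 part3 by blast
qed

end
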